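(* Let $G=(V,E)$ be a finite graph, $\psi\in C^1((0,\infty))$ and $d>0$. The following are equivalent: (1) $G$ satisfies the $CD\psi(d,0)$ inequality. (2) For every positive solution $u$ to the heat equation on $G$ and all $t\ge 0$, \[ \mathcal{L}\left(-u\,\Delta^\psi u\right)\ \ge\ \frac{2}{d}\,u\,\left(\Delta^\psi u\right)^2 . \]
   Context: A finite graph $G=(V,E)$ consists of a finite set $V$ and an irreflexive symmetric relation $E\subset V\times V$; write $v\sim w$ if $(v,w)\in E$. $C(V)$ denotes real functions on $V$, $C^+(V)$ the positive ones. Laplacian: $\Delta f(v)=\sum_{w\sim v}(f(w)-f(v))$. For $\psi\in C^1((0,\infty))$, $f\in C^+(V)$: $(\Delta^\psi f)(v):=\Delta\big[\psi\big(\tfrac{f}{f(v)}\big)\big](v)$; $(\Omega^\psi f)(v):=\Delta\Big[\psi'\big(\tfrac{f}{f(v)}\big)\cdot\tfrac{f}{f(v)}\cdot\big(\tfrac{\Delta f}{f}-\tfrac{(\Delta f)(v)}{f(v)}\big)\Big](v)$; $2\Gamma_2^\psi(f):=\Omega^\psi f+\frac{\Delta f\,\Delta^\psi f}{f}-\frac{\Delta(f\,\Delta^\psi f)}{f}$. $G$ satisfies $CD\psi(d,0)$ if $\Gamma_2^\psi(f)\ge\frac1d(\Delta^\psi f)^2$ pointwise for all $f\in C^+(V)$. The heat operator is $\mathcal{L}(u)=\Delta u-\partial_t u$; a solution to the heat equation on $G$ is a function $u:V\times[0,\infty)\to\mathbb{R}$, continuously differentiable in $t$, with $\mathcal{L}(u)=0$.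 Operators $\Delta^\psi,\Gamma_2^\psi$ applied to $u$ act on $u(\cdot,t)$ for each fixed $t$. *)

theory Defs
  imports "HOL-Analysis.Analysis"
begin

definition finite_graph :: "'a set \<Rightarrow> ('a \<Rightarrow> 'a \<Rightarrow> bool) \<Rightarrow> bool" where
  "finite_graph V E \<longleftrightarrow> finite V \<and> (\<forall>v w. E v w \<longrightarrow> v \<in> V \<and> w \<in> V)
     \<and> (\<forall>v. \<not> E v v) \<and> (\<forall>v w. E v w \<longrightarrow> E w v)"

definition lap :: "'a set \<Rightarrow> ('a \<Rightarrow> 'a \<Rightarrow> bool) \<Rightarrow> ('a \<Rightarrow> real) \<Rightarrow> 'a \<Rightarrow> real" where
  "lap V E f v = (\<Sum>w\<in>{w\<in>V. E v w}. f w - f v)"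

definition lap_psi :: "'a set \<Rightarrow> ('a \<Rightarrow> 'a \<Rightarrow> bool) \<Rightarrow> (real \<Rightarrow> real) \<Rightarrow> ('a \<Rightarrow> real) \<Rightarrow> 'a \<Rightarrow> real" where
  "lap_psi V E psi f v = lap V E (\<lambda>w. psi (f w / f v)) v"

definition Omega_psi :: "'a set \<Rightarrow> ('a \<Rightarrow> 'a \<Rightarrow> bool) \<Rightarrow> (real \<Rightarrow> real) \<Rightarrow> ('a \<Rightarrow> real) \<Rightarrow> 'a \<Rightarrow> real" where
  "Omega_psi V E psi f v = lap V E (\<lambda>w. deriv psi (f w / f v) * (f w / f v)
       * (lap V E f w / f w - lap V E f v / f v)) v"

definition Gamma2_psi :: "'a set \<Rightarrow> ('a \<Rightarrow> 'a \<Rightarrow> bool) \<Rightarrow> (real \<Rightarrow> real) \<Rightarrow> ('a \<Rightarrow> real) \<Rightarrow> 'a \<Rightarrow> real" where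
  "Gamma2_psi V E psi f v = (Omega_psi V E psi f v
       + lap V E f v * lap_psi V E psi f v / f v
       - lap V E (\<lambda>w. f w * lap_psi V E psi f w) v / f v) / 2"

definition CD_psi :: "'a set \<Rightarrow> ('a \<Rightarrow> 'a \<Rightarrow> bool) \<Rightarrow> (real \<Rightarrow> real) \<Rightarrow> real \<Rightarrow> bool" where
  "CD_psi V E psi d \<longleftrightarrow> (\<forall>f. (\<forall>v\<in>V. f v > 0) \<longrightarrow>
      (\<forall>v\<in>V. Gamma2_psi V E psi f v \<ge> (lap_psi V E psi f v)\<^sup>2 / d))"

definition dt :: "('a \<Rightarrow> real \<Rightarrow> real) \<Rightarrow> 'a \<Rightarrow> real \<Rightarrow> real" where
  "dt u v t = vector_derivative (u v) (at t within {0..})"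

definition heat_op :: "'a set \<Rightarrow> ('a \<Rightarrow> 'a \<Rightarrow> bool) \<Rightarrow> ('a \<Rightarrow> real \<Rightarrow> real) \<Rightarrow> 'a \<Rightarrow> real \<Rightarrow> real" where
  "heat_op V E w v t = lap V E (\<lambda>x. w x t) v - dt w v t"

definition heat_solution :: "'a set \<Rightarrow> ('a \<Rightarrow> 'a \<Rightarrow> bool) \<Rightarrow> ('a \<Rightarrow> real \<Rightarrow> real) \<Rightarrow> bool" where
  "heat_solution V E u \<longleftrightarrow> (\<forall>v\<in>V.
      (\<forall>t\<ge>0. (u v has_real_derivative dt u v t) (at t within {0..}))
      \<and> continuous_on {0..} (dt u v)
      \<and> (\<forall>t\<ge>0. heat_op V E u v t = 0))"

end

theory Submission
  imports Defs
begin


lemma at_within_Ici_nonbot: "(t::real) \<ge> 0 \<Longrightarrow> at t within {0..} \<noteq> bot"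
proof -
  assume t: "t \<ge> 0"
  have "t islimpt {0..t+1}" using t by simp
  then have "t islimpt {0::real..}" by (rule islimpt_subset) auto
  then show ?thesis by (simp add: trivial_limit_within)
qed

lemma dt_eq:
  assumes "(u v has_real_derivative D) (at t within {0..})" "t \<ge> 0"
  shows "dt u v t = D"
  unfolding dt_def
  by (rule vector_derivative_within[OF at_within_Ici_nonbot[OF assms(2)]])
     (use assms(1) in \<open>simp add: has_real_derivative_iff_has_vector_derivative\<close>)

lemma lap_neg: "lap V E (\<lambda>x. - g x) v = - lap V E g v"
  unfolding lap_def by (simp add: sum_negf[symmetric])



lemma key:
  assumes fg: "finite_graph V E"
    and psid: "\<forall>x>0. psi differentiable (at x)"
    and hs: "heat_solution V E u"
    and pos: "\<forall>v\<in>V. \<forall>t\<ge>0. u v t > 0"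
    and t: "t \<ge> 0" and v: "v \<in> V"
  shows "heat_op V E (\<lambda>x s. - u x s * lap_psi V E psi (\<lambda>y. u y s) x) v t
       = 2 * u v t * Gamma2_psi V E psi (\<lambda>y. u y t) v"
proof -
  define N where "N = {w\<in>V. E v w}"
  have finN: "finite N" using fg unfolding finite_graph_def N_def by auto
  have NV: "N \<subseteq> V" unfolding N_def by auto
  define L where "L w = lap V E (\<lambda>y. u y t) w" for w
  have du: "(u w has_real_derivative L w) (at t within {0..})" if "w \<in> V" for w
  proof -
    have "(u w has_real_derivative dt u w t) (at t within {0..})" "heat_op V E u w t = 0"
      using hs that t unfolding heat_solution_def by auto
    then show ?thesis unfolding heat_op_def L_def by simp
  qed
  define a where "a = u v t"
  have a0: "a > 0" using pos v t a_def by auto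
  have uw0: "u w t > 0" if "w \<in> V" for w using pos that t by auto
  define dq where "dq w = (L w * a - u w t * L v) / (a * a)" for w
  have dq: "((\<lambda>s. u w s / u v s) has_real_derivative dq w) (at t within {0..})" if "w \<in> V" for w
    unfolding dq_def a_def using DERIV_divide[OF du[OF that] du[OF v]] a0 a_def by simp
  have dpsi: "((\<lambda>s. psi (u w s / u v s)) has_real_derivative deriv psi (u w t / a) * dq w) (at t within {0..})"
    if "w \<in> V" for w
  proof (rule DERIV_chain2[OF _ dq[OF that]])
    have "u w t / u v t > 0" using uw0[OF that] a0 a_def by simp
    then show "DERIV psi (u w t / u v t) :> deriv psi (u w t / a)"
      using psid a_def by (simp add: DERIV_deriv_iff_real_differentiable)
  qed
  define S' where "S' = (\<Sum>w\<in>N. deriv psi (u w t / a) * dq w - deriv psi (u v t / a) * dq v)"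
  have dPsi: "((\<lambda>s. lap_psi V E psi (\<lambda>y. u y s) v) has_real_derivative S') (at t within {0..})"
    unfolding lap_psi_def lap_def S'_def N_def[symmetric]
    by (rule DERIV_sum, rule DERIV_diff) (use dpsi NV v in blast)+
  define Psi where "Psi = lap_psi V E psi (\<lambda>y. u y t) v"
  have dg: "((\<lambda>s. - u v s * lap_psi V E psi (\<lambda>y. u y s) v) has_real_derivative - (L v * Psi + a * S')) (at t within {0..})"
    using DERIV_minus[OF DERIV_mult[OF du[OF v] dPsi]] unfolding Psi_def a_def
    by (simp add: algebra_simps)
  have dtg: "dt (\<lambda>x s. - u x s * lap_psi V E psi (\<lambda>y. u y s) x) v t = - (L v * Psi + a * S')"
    by (rule dt_eq[OF _ t]) (use dg in simp)
  define H where "H = (\<lambda>w. deriv psi (u w t / u v t) * (u w t / u v t) * (L w / u w t - L v / u v t))"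
  have OH: "Omega_psi V E psi (\<lambda>y. u y t) v = lap V E H v"
    by (simp add: Omega_psi_def H_def L_def)
  have SO: "S' = Omega_psi V E psi (\<lambda>y. u y t) v"
    unfolding OH S'_def
    unfolding lap_def N_def[symmetric]
  proof (rule sum.cong[OF refl])
    fix w assume w: "w \<in> N"
    have uw: "u w t > 0" using uw0 w NV by auto
    have "dq v = 0" unfolding dq_def a_def by simp
    moreover have "dq w = u w t / a * (L w / u w t - L v / a)"
      unfolding dq_def using uw a0 by (simp add: field_simps)
    moreover have "H v = 0" unfolding H_def by simp
    ultimately show "deriv psi (u w t / a) * dq w - deriv psi (u v t / a) * dq v = H w - H v"
      unfolding H_def a_def by simp
  qed
  have "heat_op V E (\<lambda>x s. - u x s * lap_psi V E psi (\<lambda>y. u y s) x) v t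
      = - lap V E (\<lambda>x. u x t * lap_psi V E psi (\<lambda>y. u y t) x) v + (L v * Psi + a * S')"
    unfolding heat_op_def dtg using lap_neg[of V E "\<lambda>x. u x t * lap_psi V E psi (\<lambda>y. u y t) x" v]
    by simp
  also have "\<dots> = 2 * u v t * Gamma2_psi V E psi (\<lambda>y. u y t) v"
    unfolding Gamma2_psi_def SO Psi_def L_def a_def using a0 a_def
    by (simp add: field_simps)
  finally show ?thesis .
qed



lemma lap_alt:
  "lap V E g v = (\<Sum>w\<in>{w\<in>V. E v w}. g w) - real (card {w\<in>V. E v w}) * g v"
  unfolding lap_def by (simp add: sum_subtractf)

lemma lap_scale: "lap V E (\<lambda>w. c * g w) v = c * lap V E g v"
  unfolding lap_def by (simp add: sum_distrib_left algebra_simps)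

lemma lap_bound:
  assumes "finite V" "\<forall>w\<in>V. \<bar>g w\<bar> \<le> B" "v \<in> V"
  shows "\<bar>lap V E g v\<bar> \<le> 2 * real (card V) * B"
proof -
  let ?N = "{w\<in>V. E v w}"
  have B0: "B \<ge> 0" using assms by force
  have "\<bar>lap V E g v\<bar> \<le> (\<Sum>w\<in>?N. \<bar>g w - g v\<bar>)" unfolding lap_def by (rule sum_abs)
  also have "\<dots> \<le> (\<Sum>w\<in>?N. 2 * B)"
  proof (rule sum_mono)
    fix w assume "w \<in> ?N"
    then have "\<bar>g w\<bar> \<le> B" "\<bar>g v\<bar> \<le> B" using assms by auto
    then show "\<bar>g w - g v\<bar> \<le> 2 * B" by linarith
  qed
  also have "\<dots> = real (card ?N) * (2 * B)" by simp
  also have "\<dots> \<le> real (card V) * (2 * B)"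
    using B0 assms(1) by (intro mult_right_mono) (auto intro: card_mono)
  finally show ?thesis by simp
qed

lemma lap_sums:
  assumes "\<And>w. w \<in> V \<Longrightarrow> (\<lambda>n. F n w) sums (G w)" "v \<in> V"
  shows "(\<lambda>n. lap V E (F n) v) sums (lap V E G v)"
  unfolding lap_def
  by (rule sums_sum, rule sums_diff) (use assms in auto)

lemma exists_heat:
  assumes fg: "finite_graph V E" and fpos: "\<forall>v\<in>V. f v > 0"
  shows "\<exists>u. heat_solution V E u \<and> (\<forall>v\<in>V. \<forall>t\<ge>0. u v t > 0) \<and> (\<forall>y. u y 0 = f y)"
proof -
  have finV: "finite V" using fg unfolding finite_graph_def by auto
  define k where "k = real (card V)"
  define A where "A g = (\<lambda>v. lap V E g v + k * g v)" for g :: "'a \<Rightarrow> real"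
  define P where "P n = (A ^^ n) f" for n
  have PS: "P (Suc n) = A (P n)" for n unfolding P_def by simp
  define M where "M = (\<Sum>v\<in>V. \<bar>f v\<bar>)"
  define C where "C = 3 * k"
  have k0: "k \<ge> 0" unfolding k_def by simp
  have bound: "\<forall>v\<in>V. \<bar>P n v\<bar> \<le> C ^ n * M" for n
  proof (induction n)
    case 0
    show ?case unfolding P_def M_def
      using finV by (auto intro: member_le_sum[where f = "\<lambda>v. \<bar>f v\<bar>"])
  next
    case (Suc n)
    show ?case
    proof
      fix v assume v: "v \<in> V"
      have lb: "\<bar>lap V E (P n) v\<bar> \<le> 2 * k * (C ^ n * M)"
        using lap_bound[OF finV Suc.IH v] unfolding k_def .
      have "\<bar>k * P n v\<bar> \<le> k * (C ^ n * M)"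
        using Suc.IH v k0 by (simp add: abs_mult mult_left_mono)
      with lb have "\<bar>A (P n) v\<bar> \<le> 3 * k * (C ^ n * M)" unfolding A_def by linarith
      then show "\<bar>P (Suc n) v\<bar> \<le> C ^ Suc n * M" unfolding PS C_def by (simp add: algebra_simps)
    qed
  qed
  have cardN: "real (card {w\<in>V. E v w}) \<le> k" for v
    unfolding k_def using finV by (auto intro: card_mono)
  have nonneg: "\<forall>v\<in>V. P n v \<ge> 0" for n
  proof (induction n)
    case 0 show ?case unfolding P_def using fpos by auto
  next
    case (Suc n)
    show ?case
    proof
      fix v assume v: "v \<in> V"
      have "(\<Sum>w\<in>{w\<in>V. E v w}. P n w) \<ge> 0" using Suc.IH by (auto intro: sum_nonneg)
      moreover have "(k - real (card {w\<in>V. E v w})) * P n v \<ge> 0"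
        using cardN[of v] Suc.IH v by auto
      ultimately show "P (Suc n) v \<ge> 0" unfolding PS A_def lap_alt by (simp add: algebra_simps)
    qed
  qed
  define S where "S w x = (\<Sum>n. P n w / fact n * x ^ n)" for w x
  have summ: "summable (\<lambda>n. P n w / fact n * x ^ n)" if w: "w \<in> V" for w x
  proof (rule summable_comparison_test')
    show "summable (\<lambda>n. M * (inverse (fact n) * (C * \<bar>x\<bar>) ^ n))"
      by (intro summable_mult summable_exp)
    fix n :: nat
    have "norm (P n w / fact n * x ^ n) = \<bar>P n w\<bar> * \<bar>x\<bar> ^ n / fact n"
      by (simp add: abs_mult power_abs)
    also have "\<dots> \<le> C ^ n * M * \<bar>x\<bar> ^ n / fact n"
      using bound w by (intro divide_right_mono mult_right_mono) auto
    also have "\<dots> = M * (inverse (fact n) * (C * \<bar>x\<bar>) ^ n)"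
      by (simp add: power_mult_distrib field_simps)
    finally show "norm (P n w / fact n * x ^ n) \<le> M * (inverse (fact n) * (C * \<bar>x\<bar>) ^ n)" .
  qed
  have dS: "(S v has_real_derivative (lap V E (\<lambda>w. S w x) v + k * S v x)) (at x)" if v: "v \<in> V" for v x
  proof -
    have "((\<lambda>x. \<Sum>n. P n v / fact n * x ^ n) has_real_derivative
          (\<Sum>n. diffs (\<lambda>n. P n v / fact n) n * x ^ n)) (at x)"
      by (rule termdiffs_strong_converges_everywhere) (use summ v in auto)
    moreover have "(\<lambda>n. diffs (\<lambda>n. P n v / fact n) n * x ^ n) sums (lap V E (\<lambda>w. S w x) v + k * S v x)"
    proof -
      have eq: "diffs (\<lambda>n. P n v / fact n) n * x ^ n
          = lap V E (\<lambda>w. P n w / fact n * x ^ n) v + k * (P n v / fact n * x ^ n)" for n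
      proof -
        have "lap V E (\<lambda>w. P n w / fact n * x ^ n) v = (x ^ n / fact n) * lap V E (P n) v"
          using lap_scale[of V E "x ^ n / fact n" "P n" v] by (simp add: algebra_simps)
        moreover have Q: "of_nat (Suc n) * (Q / fact (Suc n)) = Q / (fact n :: real)" for Q
          by (simp add: fact_Suc divide_simps del: of_nat_Suc)
        moreover have "diffs (\<lambda>n. P n v / fact n) n * x ^ n = A (P n) v / fact n * x ^ n"
          by (simp only: diffs_def PS Q)
        ultimately show ?thesis unfolding A_def
          by (simp add: field_simps)
      qed
      have s1: "(\<lambda>n. lap V E (\<lambda>w. P n w / fact n * x ^ n) v) sums (lap V E (\<lambda>w. S w x) v)"
        by (rule lap_sums[OF _ v]) (use summ in \<open>auto simp: S_def intro: summable_sums\<close>)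
      have s2: "(\<lambda>n. k * (P n v / fact n * x ^ n)) sums (k * S v x)"
        unfolding S_def by (intro sums_mult summable_sums summ v)
      show ?thesis unfolding eq by (rule sums_add[OF s1 s2])
    qed
    ultimately show ?thesis unfolding S_def[abs_def] by (simp only: sums_unique[symmetric])
  qed
  define u where "u w x = exp (- k * x) * S w x" for w x
  have du: "(u v has_real_derivative lap V E (\<lambda>w. u w x) v) (at x)" if v: "v \<in> V" for v x
  proof -
    have e: "((\<lambda>x. exp (- k * x)) has_real_derivative exp (- k * x) * (- k)) (at x)"
      by (auto intro!: derivative_eq_intros)
    have "lap V E (\<lambda>w. u w x) v = exp (- k * x) * lap V E (\<lambda>w. S w x) v"
      unfolding u_def by (rule lap_scale)
    then show ?thesis
      using DERIV_mult[OF e dS[OF v, of x]] unfolding u_def[abs_def]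
      by (simp add: algebra_simps)
  qed
  have hs: "heat_solution V E u"
    unfolding heat_solution_def
  proof (intro ballI conjI allI impI)
    fix v assume v: "v \<in> V"
    fix t :: real assume t: "t \<ge> 0"
    have d: "(u v has_real_derivative lap V E (\<lambda>w. u w t) v) (at t within {0..})"
      using du[OF v] by (rule has_field_derivative_at_within)
    have dt: "dt u v t = lap V E (\<lambda>w. u w t) v" by (rule dt_eq[of u v, OF d t])
    show "(u v has_real_derivative dt u v t) (at t within {0..})" using d dt by simp
    show "heat_op V E u v t = 0" unfolding heat_op_def dt by simp
  next
    fix v assume v: "v \<in> V"
    have cu: "continuous_on X (u w)" if "w \<in> V" for w X
      by (rule DERIV_continuous_on, rule has_field_derivative_at_within, rule du[OF that])
    have "continuous_on {0..} (\<lambda>t. lap V E (\<lambda>w. u w t) v)"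
      unfolding lap_def by (intro continuous_on_sum continuous_on_diff cu v) auto
    moreover have dteq: "dt u v t = lap V E (\<lambda>w. u w t) v" if "t \<in> {0..}" for t
      using dt_eq[of u v, OF has_field_derivative_at_within[OF du[OF v]]] that by auto
    ultimately show "continuous_on {0..} (dt u v)"
      by (subst continuous_on_cong[OF refl dteq]) auto
  qed
  have pos: "\<forall>v\<in>V. \<forall>t\<ge>0. u v t > 0"
  proof (intro ballI allI impI)
    fix v t assume v: "v \<in> V" and t: "(t::real) \<ge> 0"
    have "sum (\<lambda>n. P n v / fact n * t ^ n) {0} \<le> S v t"
      unfolding S_def
      by (rule sum_le_suminf[OF summ[OF v]]) (use nonneg v t in auto)
    then have "S v t \<ge> f v" by (simp add: P_def)
    then have "S v t > 0" using fpos v by auto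
    then show "u v t > 0" unfolding u_def by simp
  qed
  have init: "u y 0 = f y" for y
    unfolding u_def S_def using powser_zero[of "\<lambda>n. P n y / fact n"] by (simp add: P_def)
  show ?thesis using hs pos init by blast
qed


theorem mainTheorem2:
  fixes V :: "'a set" and E :: "'a \<Rightarrow> 'a \<Rightarrow> bool" and psi :: "real \<Rightarrow> real" and d :: real
  assumes "finite_graph V E"
    and "\<forall>x>0. psi differentiable (at x)"
    and "continuous_on {0<..} (deriv psi)"
    and "d > 0"
  shows "CD_psi V E psi d \<longleftrightarrow>
    (\<forall>u. heat_solution V E u \<and> (\<forall>v\<in>V. \<forall>t\<ge>0. u v t > 0) \<longrightarrow>
      (\<forall>t\<ge>0. \<forall>v\<in>V.
         heat_op V E (\<lambda>x s. - u x s * lap_psi V E psi (\<lambda>y. u y s) x) v t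
           \<ge> 2 / d * u v t * (lap_psi V E psi (\<lambda>y. u y t) v)\<^sup>2))"
proof
  assume CD: "CD_psi V E psi d"
  show "\<forall>u. heat_solution V E u \<and> (\<forall>v\<in>V. \<forall>t\<ge>0. u v t > 0) \<longrightarrow>
      (\<forall>t\<ge>0. \<forall>v\<in>V.
         heat_op V E (\<lambda>x s. - u x s * lap_psi V E psi (\<lambda>y. u y s) x) v t
           \<ge> 2 / d * u v t * (lap_psi V E psi (\<lambda>y. u y t) v)\<^sup>2)"
  proof (intro allI impI ballI)
    fix u t v
    assume h: "heat_solution V E u \<and> (\<forall>v\<in>V. \<forall>t\<ge>0. u v t > 0)" and t: "(t::real) \<ge> 0" and v: "v \<in> V"
    have k: "heat_op V E (\<lambda>x s. - u x s * lap_psi V E psi (\<lambda>y. u y s) x) v t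
       = 2 * u v t * Gamma2_psi V E psi (\<lambda>y. u y t) v"
      using key[OF assms(1) assms(2) _ _ t v] h by blast
    have "Gamma2_psi V E psi (\<lambda>y. u y t) v \<ge> (lap_psi V E psi (\<lambda>y. u y t) v)\<^sup>2 / d"
      using CD h t v unfolding CD_psi_def by auto
    moreover have a: "u v t > 0" using h t v by auto
    ultimately have "2 * u v t * Gamma2_psi V E psi (\<lambda>y. u y t) v
        \<ge> 2 * u v t * ((lap_psi V E psi (\<lambda>y. u y t) v)\<^sup>2 / d)"
      by (intro mult_left_mono) auto
    then show "heat_op V E (\<lambda>x s. - u x s * lap_psi V E psi (\<lambda>y. u y s) x) v t
           \<ge> 2 / d * u v t * (lap_psi V E psi (\<lambda>y. u y t) v)\<^sup>2"
      unfolding k by (simp add: field_simps)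
  qed
next
  assume H: "\<forall>u. heat_solution V E u \<and> (\<forall>v\<in>V. \<forall>t\<ge>0. u v t > 0) \<longrightarrow>
      (\<forall>t\<ge>0. \<forall>v\<in>V.
         heat_op V E (\<lambda>x s. - u x s * lap_psi V E psi (\<lambda>y. u y s) x) v t
           \<ge> 2 / d * u v t * (lap_psi V E psi (\<lambda>y. u y t) v)\<^sup>2)"
  show "CD_psi V E psi d"
    unfolding CD_psi_def
  proof (intro allI impI ballI)
    fix f :: "'a \<Rightarrow> real" and v
    assume f: "\<forall>v\<in>V. f v > 0" and v: "v \<in> V"
    obtain u where hs: "heat_solution V E u" and pos: "\<forall>v\<in>V. \<forall>t\<ge>0. u v t > 0"
      and init: "\<forall>y. u y 0 = f y"
      using exists_heat[OF assms(1) f] by blast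
    have fu: "(\<lambda>y. u y 0) = f" using init by auto
    have "heat_op V E (\<lambda>x s. - u x s * lap_psi V E psi (\<lambda>y. u y s) x) v 0
           \<ge> 2 / d * u v 0 * (lap_psi V E psi (\<lambda>y. u y 0) v)\<^sup>2"
      using H hs pos v by auto
    moreover have "heat_op V E (\<lambda>x s. - u x s * lap_psi V E psi (\<lambda>y. u y s) x) v 0
       = 2 * u v 0 * Gamma2_psi V E psi (\<lambda>y. u y 0) v"
      by (rule key[OF assms(1) assms(2) hs pos _ v]) simp
    ultimately have "2 * f v * Gamma2_psi V E psi f v \<ge> 2 / d * f v * (lap_psi V E psi f v)\<^sup>2"
      unfolding fu using init by simp
    moreover have "f v > 0" using f v by auto
    ultimately show "Gamma2_psi V E psi f v \<ge> (lap_psi V E psi f v)\<^sup>2 / d"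
      using assms(4) by (simp add: field_simps)
  qed
qed

end
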